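(* Let $\mathcal{C}\subseteq\{\pm1\}^n$ be an $\epsilon$-balanced linear code, let $L\subseteq[n]$ with $|L|=\ell>0$, let $a\in\{\pm1\}^L$, and let $\mathcal{R}=\{c\in\mathcal{C}: c_j=a_j\text{ for all }j\in L\}$. If $\ell/n>2\epsilon$, then $$|\mathcal{R}|\le\frac{1-2\epsilon}{\ell/n-2\epsilon}.$$
   Context: The binary field $\mathbb{F}_2$ is represented by $\{\pm1\}$; a linear code is an $\mathbb{F}_2$-subspace of $\{\pm1\}^n$. A code is $\epsilon$-balanced if $(1/2-\epsilon)n\le d_H(c,c')\le(1/2+\epsilon)n$ for all distinct codewords $c,c'$, where $d_H$ is Hamming distance. $\mathcal{R}$ is the set of codewords of $\mathcal{C}$ whose entries at the positions in $L$ are fixed to the prescribed values $a$. *)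

theory Defs
  imports Complex_Main
begin

text \<open>Words of length n over F_2 represented multiplicatively by {1,-1}, as integer lists.\<close>
definition pm_words :: "nat \<Rightarrow> int list set" where
  "pm_words n = {w. length w = n \<and> set w \<subseteq> {-1, 1}}"

text \<open>Addition in F_2^n corresponds to coordinatewise multiplication.\<close>
definition pm_add :: "int list \<Rightarrow> int list \<Rightarrow> int list" where
  "pm_add u v = map2 (*) u v"

text \<open>A linear code: an F_2-subspace of {+-1}^n (contains zero = all-ones word, closed under addition).\<close>
definition linear_code :: "nat \<Rightarrow> int list set \<Rightarrow> bool" where
  "linear_code n C \<longleftrightarrow> C \<subseteq> pm_words n \<and> replicate n 1 \<in> C \<and>
     (\<forall>u\<in>C. \<forall>v\<in>C. pm_add u v \<in> C)"

definition hamming_dist :: "int list \<Rightarrow> int list \<Rightarrow> nat" where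
  "hamming_dist u v = card {i. i < length u \<and> u ! i \<noteq> v ! i}"

definition eps_balanced :: "nat \<Rightarrow> real \<Rightarrow> int list set \<Rightarrow> bool" where
  "eps_balanced n \<epsilon> C \<longleftrightarrow> (\<forall>c\<in>C. \<forall>c'\<in>C. c \<noteq> c' \<longrightarrow>
     (1/2 - \<epsilon>) * real n \<le> real (hamming_dist c c') \<and>
     real (hamming_dist c c') \<le> (1/2 + \<epsilon>) * real n)"

definition restricted_code :: "int list set \<Rightarrow> nat set \<Rightarrow> (nat \<Rightarrow> int) \<Rightarrow> int list set" where
  "restricted_code C L a = {c \<in> C. \<forall>j\<in>L. c ! j = a j}"

end

theory Submission
  imports Defs
begin

definition ipr :: "nat \<Rightarrow> int list \<Rightarrow> int list \<Rightarrow> real" where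
  "ipr n c d = (\<Sum>j<n. real_of_int (c!j) * real_of_int (d!j))"

lemma pm_entry: "c \<in> pm_words n \<Longrightarrow> j < n \<Longrightarrow> c!j = -1 \<or> c!j = 1"
  unfolding pm_words_def using nth_mem by fastforce

lemma ipr_dist:
  assumes "c \<in> pm_words n" "d \<in> pm_words n"
  shows "ipr n c d = real n - 2 * real (hamming_dist c d)"
proof -
  define D where "D = {j. j < n \<and> c!j \<noteq> d!j}"
  have lc: "length c = n" using assms unfolding pm_words_def by auto
  have hd: "hamming_dist c d = card D" unfolding hamming_dist_def D_def lc ..
  have DS: "D \<subseteq> {..<n}" unfolding D_def by auto
  have fD: "finite D" using finite_subset[OF DS] by simp
  have "ipr n c d = (\<Sum>j\<in>D. real_of_int (c!j) * real_of_int (d!j))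
     + (\<Sum>j\<in>{..<n}-D. real_of_int (c!j) * real_of_int (d!j))"
    unfolding ipr_def using DS by (metis (no_types, lifting) finite_lessThan sum.subset_diff add.commute)
  also have "(\<Sum>j\<in>D. real_of_int (c!j) * real_of_int (d!j)) = (\<Sum>j\<in>D. -1)"
  proof (rule sum.cong)
    fix j assume "j \<in> D"
    then have "j < n" "c!j \<noteq> d!j" unfolding D_def by auto
    then show "real_of_int (c!j) * real_of_int (d!j) = -1"
      using pm_entry[OF assms(1)] pm_entry[OF assms(2)] by force
  qed simp
  also have "(\<Sum>j\<in>{..<n}-D. real_of_int (c!j) * real_of_int (d!j)) = (\<Sum>j\<in>{..<n}-D. 1)"
  proof (rule sum.cong)
    fix j assume "j \<in> {..<n}-D"
    then have "j < n" "c!j = d!j" unfolding D_def by auto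
    then show "real_of_int (c!j) * real_of_int (d!j) = 1"
      using pm_entry[OF assms(1) \<open>j < n\<close>] by auto
  qed simp
  finally have "ipr n c d = - real (card D) + real (card ({..<n} - D))" by simp
  also have "card ({..<n} - D) = n - card D" using DS fD by (simp add: card_Diff_subset)
  finally show ?thesis using hd card_mono[OF _ DS] by (simp add: of_nat_diff)
qed

theorem lemma4:
  fixes n :: nat and \<epsilon> :: real and C :: "int list set" and L :: "nat set" and a :: "nat \<Rightarrow> int"
  assumes "linear_code n C"
    and "eps_balanced n \<epsilon> C"
    and "L \<subseteq> {0..<n}"
    and "card L > 0"
    and "\<forall>j\<in>L. a j \<in> {-1, 1}"
    and "real (card L) / real n > 2 * \<epsilon>"
  shows "real (card (restricted_code C L a))
           \<le> (1 - 2 * \<epsilon>) / (real (card L) / real n - 2 * \<epsilon>)"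
proof -
  define R where "R = restricted_code C L a"
  define m where "m = card R"
  define l where "l = card L"
  have CP: "C \<subseteq> pm_words n" using assms(1) unfolding linear_code_def by auto
  have RC: "R \<subseteq> C" unfolding R_def restricted_code_def by auto
  have fP: "finite (pm_words n)"
  proof -
    have "pm_words n \<subseteq> {w. set w \<subseteq> {-1,1::int} \<and> length w = n}" unfolding pm_words_def by auto
    thus ?thesis using finite_lists_length_eq[of "{-1,1::int}" n] finite_subset by auto
  qed
  have fR: "finite R" using finite_subset[OF subset_trans[OF RC CP] fP] .
  have RP: "\<And>c. c \<in> R \<Longrightarrow> c \<in> pm_words n" using RC CP by auto
  have fL: "finite L" using finite_subset[OF assms(3)] by simp
  have ln: "l \<le> n" unfolding l_def using card_mono[OF _ assms(3)] by simp
  have lpos: "l > 0" using assms(4) l_def by simp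
  have npos: "n > 0" using ln lpos by simp
  have gap: "real l / real n - 2 * \<epsilon> > 0" using assms(6) l_def by simp
  have num: "1 - 2 * \<epsilon> \<ge> real l / real n - 2 * \<epsilon>" using ln npos by (simp add: divide_le_eq)
  define S where "S j = (\<Sum>c\<in>R. real_of_int (c!j))" for j
  have key: "(\<Sum>j<n. (S j)^2) = (\<Sum>c\<in>R. \<Sum>d\<in>R. ipr n c d)"
  proof -
    have "(\<Sum>j<n. (S j)^2) = (\<Sum>j<n. \<Sum>c\<in>R. \<Sum>d\<in>R. real_of_int (c!j) * real_of_int (d!j))"
      unfolding S_def power2_eq_square sum_product ..
    also have "\<dots> = (\<Sum>c\<in>R. \<Sum>j<n. \<Sum>d\<in>R. real_of_int (c!j) * real_of_int (d!j))"
      by (rule sum.swap)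
    also have "\<dots> = (\<Sum>c\<in>R. \<Sum>d\<in>R. \<Sum>j<n. real_of_int (c!j) * real_of_int (d!j))"
      by (intro sum.cong refl sum.swap)
    finally show ?thesis unfolding ipr_def .
  qed
  have upper: "(\<Sum>c\<in>R. \<Sum>d\<in>R. ipr n c d) \<le> (\<Sum>c\<in>R. real n + (real m - 1) * (2 * \<epsilon> * real n))"
  proof (rule sum_mono)
    fix c assume cR: "c \<in> R"
    have self: "ipr n c c = real n" using ipr_dist[OF RP[OF cR] RP[OF cR]]
      by (simp add: hamming_dist_def)
    have other: "ipr n c d \<le> 2 * \<epsilon> * real n" if "d \<in> R - {c}" for d
    proof -
      have "d \<in> C" "c \<in> C" "c \<noteq> d" using that cR RC by auto
      then have "(1/2 - \<epsilon>) * real n \<le> real (hamming_dist c d)"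
        using assms(2) unfolding eps_balanced_def by blast
      then show ?thesis using ipr_dist[OF RP[OF cR] RP[of d]] that by (simp add: algebra_simps)
    qed
    have "(\<Sum>d\<in>R. ipr n c d) = ipr n c c + (\<Sum>d\<in>R-{c}. ipr n c d)"
      using fR cR by (simp add: sum.remove)
    also have "(\<Sum>d\<in>R-{c}. ipr n c d) \<le> (\<Sum>d\<in>R-{c}. 2 * \<epsilon> * real n)"
      by (rule sum_mono) (rule other)
    also have "\<dots> = (real m - 1) * (2 * \<epsilon> * real n)"
    proof -
      have "card R \<ge> 1" using fR cR by (metis One_nat_def Suc_leI card_gt_0_iff empty_iff)
      then show ?thesis using fR cR m_def by (simp add: of_nat_diff)
    qed
    finally show "(\<Sum>d\<in>R. ipr n c d) \<le> real n + (real m - 1) * (2 * \<epsilon> * real n)"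
      using self by simp
  qed
  have SL: "S j = real m * real_of_int (a j)" if "j \<in> L" for j
    unfolding S_def m_def using that
    by (simp add: R_def restricted_code_def)
  have lower: "real l * (real m)^2 \<le> (\<Sum>j<n. (S j)^2)"
  proof -
    have "(\<Sum>j\<in>L. (S j)^2) \<le> (\<Sum>j<n. (S j)^2)"
      using assms(3) by (intro sum_mono2) auto
    moreover have "(\<Sum>j\<in>L. (S j)^2) = (\<Sum>j\<in>L. (real m)^2)"
    proof (rule sum.cong)
      fix j assume "j \<in> L"
      then show "(S j)^2 = (real m)^2" using SL assms(5) by (auto simp: power_mult_distrib)
    qed simp
    ultimately show ?thesis using l_def by simp
  qed
  have main: "real l * (real m)^2 \<le> real m * (real n + (real m - 1) * (2 * \<epsilon> * real n))"
    using lower key upper m_def by simp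
  show ?thesis
  proof (cases "m = 0")
    case True
    then show ?thesis using gap num R_def m_def l_def by simp
  next
    case False
    then have mp: "real m > 0" by simp
    have "real l * real m \<le> real n + (real m - 1) * (2 * \<epsilon> * real n)"
      using main mp by (simp add: power2_eq_square mult.assoc)
    then have "real m * (real l - 2 * \<epsilon> * real n) \<le> real n * (1 - 2 * \<epsilon>)"
      by (simp add: algebra_simps)
    then have "real m * (real l / real n - 2 * \<epsilon>) \<le> 1 - 2 * \<epsilon>"
      using npos by (simp add: field_simps)
    then show ?thesis using gap R_def m_def l_def by (simp add: le_divide_eq)
  qed
qed

end
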